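(* Let $A\subset\mathbf{Z}_{\geq0}$ be finite with $0\in A$, $N=\#A\geq 2$, $A(x)=\sum_{a\in A}x^a$, and $\Omega=A+[0,1)$. Suppose that $A(x)$ has a spectrum and that the number of distinct complex numbers $x$ with $|x|=1$ and $A(x)=0$ is less than $\frac{3N}{2}-1$. Then $A\equiv\{0,1,\dots,N-1\}\pmod N$, $N\mathbf{Z}\oplus A=\mathbf{Z}$, and $N^{-1}\mathbf{Z}$ is a spectrum for $\Omega$.
   Context: A set $\{\theta_1,\dots,\theta_{N-1}\}\subset(0,1)$ is called a spectrum for $A(x)$ if the $\theta_j$ are pairwise distinct and, with $\theta_0=0$, $A(e^{2\pi i(\theta_i-\theta_j)})=0$ for all $0\leq i,j\leq N-1$ with $i\neq j$. A set $\Lambda\subset\mathbf{R}$ is a spectrum for $\Omega$ if $\{e^{2\pi i\lambda x}\}_{\lambda\in\Lambda}$ is an orthogonal basis of $L^2(\Omega)$. $N\mathbf{Z}\oplus A=\mathbf{Z}$ means every integer is uniquely of the form $a+Nk$, $a\in A$, $k\in\mathbf{Z}$. *)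

theory Defs
  imports "HOL-Analysis.Analysis"
begin

definition gen_poly :: "nat set \<Rightarrow> complex \<Rightarrow> complex" where
  "gen_poly A x = (\<Sum>a\<in>A. x ^ a)"

definition poly_has_spectrum :: "nat set \<Rightarrow> nat \<Rightarrow> bool" where
  "poly_has_spectrum A N \<longleftrightarrow>
     (\<exists>\<theta> :: nat \<Rightarrow> real.
        \<theta> 0 = 0 \<and>
        (\<forall>j\<in>{1..<N}. 0 < \<theta> j \<and> \<theta> j < 1) \<and>
        inj_on \<theta> {1..<N} \<and>
        (\<forall>i<N. \<forall>j<N. i \<noteq> j \<longrightarrow>
            gen_poly A (exp (2 * pi * \<i> * complex_of_real (\<theta> i - \<theta> j))) = 0))"

definition expo :: "real \<Rightarrow> real \<Rightarrow> complex" where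
  "expo l x = exp (2 * pi * \<i> * complex_of_real (l * x))"

definition L2_on :: "real set \<Rightarrow> (real \<Rightarrow> complex) \<Rightarrow> bool" where
  "L2_on \<Omega> f \<longleftrightarrow> f \<in> borel_measurable (lebesgue_on \<Omega>) \<and>
                   integrable (lebesgue_on \<Omega>) (\<lambda>x. (cmod (f x))\<^sup>2)"

definition L2_inner :: "real set \<Rightarrow> (real \<Rightarrow> complex) \<Rightarrow> (real \<Rightarrow> complex) \<Rightarrow> complex" where
  "L2_inner \<Omega> f g = integral\<^sup>L (lebesgue_on \<Omega>) (\<lambda>x. f x * cnj (g x))"

text \<open>Lambda is a spectrum for Omega: the exponentials e_lambda (lambda in Lambda) form an
  orthogonal basis of L^2(Omega), i.e. they are nonzero elements of L^2(Omega), pairwise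
  orthogonal, and complete (only the zero element is orthogonal to all of them).\<close>
definition spectrum_of :: "real set \<Rightarrow> real set \<Rightarrow> bool" where
  "spectrum_of \<Omega> \<Lambda> \<longleftrightarrow>
     (\<forall>l\<in>\<Lambda>. L2_on \<Omega> (expo l) \<and> \<not> (AE x in lebesgue_on \<Omega>. expo l x = 0)) \<and>
     (\<forall>l\<in>\<Lambda>. \<forall>m\<in>\<Lambda>. l \<noteq> m \<longrightarrow> L2_inner \<Omega> (expo l) (expo m) = 0) \<and>
     (\<forall>f. L2_on \<Omega> f \<and> (\<forall>l\<in>\<Lambda>. L2_inner \<Omega> f (expo l) = 0)
            \<longrightarrow> (AE x in lebesgue_on \<Omega>. f x = 0))"

end

theory Submission
  imports Defs
begin

definition ex :: "real \<Rightarrow> complex" where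
  "ex t = exp (2 * pi * \<i> * complex_of_real t)"

lemma ex_add: "ex (s + t) = ex s * ex t"
  unfolding ex_def by (simp add: distrib_left exp_add[symmetric])

lemma ex_diff: "ex (s - t) = ex s / ex t"
  unfolding ex_def by (simp add: right_diff_distrib exp_diff[symmetric])

lemma ex_nonzero [simp]: "ex t \<noteq> 0"
  unfolding ex_def by simp

lemma norm_ex [simp]: "cmod (ex t) = 1"
  unfolding ex_def by (simp add: norm_exp_eq_Re)

lemma ex_zero [simp]: "ex 0 = 1"
  unfolding ex_def by simp

lemma ex_eq_1_iff: "ex t = 1 \<longleftrightarrow> t \<in> \<int>"
proof -
  have "ex t = 1 \<longleftrightarrow> (\<exists>n::int. 2 * pi * t = real_of_int (2*n) * pi)"
    unfolding ex_def exp_eq_1 by simp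
  also have "\<dots> \<longleftrightarrow> (\<exists>n::int. t = of_int n)"
    by (auto simp: algebra_simps)
  also have "\<dots> \<longleftrightarrow> t \<in> \<int>" by (auto elim: Ints_cases)
  finally show ?thesis .
qed

lemma ex_eq_iff: "ex s = ex t \<longleftrightarrow> s - t \<in> \<int>"
  using ex_eq_1_iff[of "s - t"] by (simp add: ex_diff)

lemma ex_inj01: "0 \<le> s \<Longrightarrow> s < 1 \<Longrightarrow> 0 \<le> t \<Longrightarrow> t < 1 \<Longrightarrow> ex s = ex t \<Longrightarrow> s = t"
proof -
  assume "0 \<le> s" "s < 1" "0 \<le> t" "t < 1" "ex s = ex t"
  then obtain n :: int where n: "s - t = of_int n" by (auto simp: ex_eq_iff elim!: Ints_cases)
  have "of_int n < (1::real)" "of_int n > (-1::real)" using n \<open>0 \<le> s\<close> \<open>s < 1\<close> \<open>0 \<le> t\<close> \<open>t < 1\<close> by linarith+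
  then have "n = 0" by linarith
  then show "s = t" using n by simp
qed

lemma gen_poly_finite_roots:
  assumes "finite A" "0 \<in> A"
  shows "finite {x. gen_poly A x = 0}"
proof -
  define p :: "complex poly" where "p = (\<Sum>a\<in>A. monom 1 a)"
  have pe: "poly p x = gen_poly A x" for x
    unfolding p_def gen_poly_def by (simp add: poly_sum poly_monom)
  have "coeff p 0 = (\<Sum>a\<in>A. if a = 0 then 1 else 0)"
    unfolding p_def by (simp add: coeff_sum coeff_monom)
  also have "\<dots> = 1" using assms by (simp add: sum.delta)
  finally have "p \<noteq> 0" by auto
  then show ?thesis using poly_roots_finite[of p] by (simp add: pe)
qed

lemma freiman_div:
  fixes T :: "complex set"
  assumes fin: "finite T" and T0: "0 \<notin> T"
    and S_def: "S = {x / y | x y. x \<in> T \<and> y \<in> T}" and small: "2 * card S < 3 * card T"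
    and xS: "x \<in> S" and yS: "y \<in> S"
  shows "x / y \<in> S"
proof -
  have finS: "finite S"
  proof -
    have "S = (\<lambda>(x,y). x / y) ` (T \<times> T)" unfolding S_def by auto
    then show ?thesis using fin by simp
  qed
  define P where "P x = {t \<in> T. t / x \<in> T}" for x
  have Pbig: "card T < 2 * card (P x)" if "x \<in> S" for x
  proof -
    obtain a b where ab: "a \<in> T" "b \<in> T" "x = a / b" using \<open>x \<in> S\<close> unfolding S_def by auto
    have a0: "a \<noteq> 0" and b0: "b \<noteq> 0" using ab T0 by auto
    define X where "X = (\<lambda>t. t / b) ` T"
    define Y where "Y = (\<lambda>t. t / a) ` T"
    have XS: "X \<subseteq> S" "Y \<subseteq> S" unfolding X_def Y_def S_def using ab by auto
    have cX: "card X = card T" unfolding X_def using b0 by (intro card_image) (auto simp: inj_on_def)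
    have cY: "card Y = card T" unfolding Y_def using a0 by (intro card_image) (auto simp: inj_on_def)
    have fXY: "finite X" "finite Y" using XS finS finite_subset by auto
    have "card (X \<union> Y) \<le> card S" using XS finS by (intro card_mono) auto
    moreover have "card (X \<union> Y) + card (X \<inter> Y) = card X + card Y" using fXY by (rule card_Un_Int[symmetric])
    ultimately have c1: "card T < 2 * card (X \<inter> Y)" using cX cY small by linarith
    have "(\<lambda>c. c * a) ` (X \<inter> Y) \<subseteq> P x"
    proof
      fix z assume "z \<in> (\<lambda>c. c * a) ` (X \<inter> Y)"
      then obtain c where c: "c \<in> X" "c \<in> Y" "z = c * a" by auto
      obtain t where t: "t \<in> T" "c = t / b" using c(1) unfolding X_def by auto
      obtain t' where t': "t' \<in> T" "c = t' / a" using c(2) unfolding Y_def by auto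
      have "z = t'" using t' c(3) a0 by simp
      moreover have "z / x = c * b" using c(3) a0 b0 by (simp add: ab(3) field_simps)
      moreover have "c * b = t" using t(2) b0 by simp
      ultimately show "z \<in> P x" unfolding P_def using t t' by auto
    qed
    moreover have "card ((\<lambda>c. c * a) ` (X \<inter> Y)) = card (X \<inter> Y)"
      using a0 by (intro card_image) (auto simp: inj_on_def)
    moreover have "finite (P x)" unfolding P_def using fin by auto
    ultimately have "card (X \<inter> Y) \<le> card (P x)" by (metis card_mono)
    with c1 show ?thesis by linarith
  qed
  have PT: "P u \<subseteq> T" for u unfolding P_def by auto
  have "P x \<inter> P y \<noteq> {}"
  proof
    assume e: "P x \<inter> P y = {}"
    have "card (P x \<union> P y) = card (P x) + card (P y)"
      using e PT fin by (intro card_Un_disjoint) (auto intro: finite_subset)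
    moreover have "card (P x \<union> P y) \<le> card T" using PT fin by (intro card_mono) auto
    ultimately show False using Pbig[OF xS] Pbig[OF yS] by linarith
  qed
  then obtain z where z: "z \<in> T" "z / x \<in> T" "z / y \<in> T" unfolding P_def by auto
  have z0: "z \<noteq> 0" using z T0 by auto
  have x0: "x \<noteq> 0" using z T0 by auto
  have "x / y = (z / y) / (z / x)" using z0 x0 by (simp add: field_simps)
  then show ?thesis unfolding S_def using z by blast
qed

lemma finite_div_closed_roots:
  fixes S :: "complex set"
  assumes fin: "finite S" and S1: "1 \<in> S" and S0: "0 \<notin> S" and cl: "\<And>x y. x \<in> S \<Longrightarrow> y \<in> S \<Longrightarrow> x / y \<in> S"
  shows "S = {z. z ^ card S = 1}"
proof -
  have inv: "1 / x \<in> S" if "x \<in> S" for x using cl[OF S1 that] .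
  have mul: "x * y \<in> S" if "x \<in> S" "y \<in> S" for x y
    using cl[OF that(1) inv[OF that(2)]] by simp
  have pw: "x ^ card S = 1" if xS: "x \<in> S" for x
  proof -
    have x0: "x \<noteq> 0" using xS S0 by auto
    have inj: "inj_on (\<lambda>s. x * s) S" using x0 by (auto simp: inj_on_def)
    have "(\<lambda>s. x * s) ` S \<subseteq> S" using mul xS by auto
    moreover have "card ((\<lambda>s. x * s) ` S) = card S" using inj by (rule card_image)
    ultimately have im: "(\<lambda>s. x * s) ` S = S" using fin by (intro card_subset_eq) auto
    have "prod (\<lambda>s. s) S = prod (\<lambda>s. s) ((\<lambda>s. x * s) ` S)" using im by simp
    also have "\<dots> = prod (\<lambda>s. x * s) S" using inj by (simp add: prod.reindex)
    also have "\<dots> = x ^ card S * prod (\<lambda>s. s) S" by (simp add: prod.distrib)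
    finally have "1 * prod (\<lambda>s. s) S = x ^ card S * prod (\<lambda>s. s) S" by simp
    moreover have "prod (\<lambda>s. s) S \<noteq> 0" using fin S0 by (auto simp: prod_zero_iff)
    ultimately show ?thesis by (metis mult_right_cancel)
  qed
  have cpos: "card S > 0" using fin S1 by (auto simp: card_gt_0_iff)
  have sub: "S \<subseteq> {z. z ^ card S = 1}" using pw by auto
  show ?thesis
    using sub card_roots_unity_eq[OF cpos] finite_roots_unity[of "card S"] cpos
    by (intro card_subset_eq) auto
qed

lemma roots_unity_sum:
  assumes M: "M > 0"
  shows "(\<Sum>z\<in>{z::complex. z ^ M = 1}. z ^ k) = (if M dvd k then of_nat M else 0)"
proof (cases "M dvd k")
  case True
  then obtain q where q: "k = M * q" by auto
  have "(\<Sum>z\<in>{z::complex. z ^ M = 1}. z ^ k) = (\<Sum>z\<in>{z::complex. z ^ M = 1}. 1)"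
    by (intro sum.cong) (auto simp: q power_mult)
  then show ?thesis using True card_roots_unity_eq[OF M] by simp
next
  case False
  define R where "R = {z::complex. z ^ M = 1}"
  define f where "f = (\<lambda>k::nat. cis (2 * pi * real k / real M))"
  have bij: "bij_betw f {..<M} R" unfolding f_def R_def by (rule Complex.bij_betw_roots_unity[OF M])
  define w where "w = f 1"
  have "w ^ M = cis (real M * (2 * pi * real 1 / real M))" unfolding w_def f_def by (rule Complex.DeMoivre)
  also have "\<dots> = 1" using M by simp
  finally have wR: "w \<in> R" unfolding R_def by simp
  have wk: "w ^ k = f (k mod M)"
  proof -
    have "w ^ k = w ^ (M * (k div M) + k mod M)" by simp
    also have "\<dots> = (w ^ M) ^ (k div M) * w ^ (k mod M)" by (simp only: power_add power_mult)
    also have "\<dots> = w ^ (k mod M)" using wR unfolding R_def by simp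
    also have "\<dots> = f (k mod M)" unfolding w_def f_def by (simp add: Complex.DeMoivre mult.commute)
    finally show ?thesis .
  qed
  have "f (k mod M) \<noteq> f 0"
  proof
    assume "f (k mod M) = f 0"
    then have "k mod M = 0" using bij M unfolding bij_betw_def inj_on_def by auto
    then show False using False by auto
  qed
  then have wk1: "w ^ k \<noteq> 1" using wk unfolding f_def by simp
  have w0: "w \<noteq> 0" using wR M unfolding R_def by (auto simp: power_0_left)
  have inj: "inj_on (\<lambda>z. w * z) R" using w0 by (auto simp: inj_on_def)
  have "(\<lambda>z. w * z) ` R \<subseteq> R" using wR unfolding R_def by (auto simp: power_mult_distrib)
  moreover have "card ((\<lambda>z. w * z) ` R) = card R" using inj by (rule card_image)
  moreover have finR: "finite R" unfolding R_def using finite_roots_unity[of M] M by simp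
  ultimately have im: "(\<lambda>z. w * z) ` R = R" by (intro card_subset_eq) auto
  have "(\<Sum>z\<in>R. z ^ k) = (\<Sum>z\<in>(\<lambda>z. w * z) ` R. z ^ k)" using im by simp
  also have "\<dots> = (\<Sum>z\<in>R. (w * z) ^ k)" using inj by (simp add: sum.reindex)
  also have "\<dots> = w ^ k * (\<Sum>z\<in>R. z ^ k)" by (simp add: power_mult_distrib sum_distrib_left)
  finally have "(1 - w ^ k) * (\<Sum>z\<in>R. z ^ k) = 0" by (simp add: algebra_simps)
  then have "(\<Sum>z\<in>R. z ^ k) = 0" using wk1 by simp
  then show ?thesis using False unfolding R_def by simp
qed

lemma dvd_shift: "r < (M::nat) \<Longrightarrow> M dvd a + (M - r) \<longleftrightarrow> a mod M = r"
  by (metis (no_types, lifting) ext Nat.add_diff_assoc diff_add_zero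
    diff_is_0_eq dvd_minus_mod le_diff_conv mod_add_self2 mod_nat_eqI
    nat_less_le)

lemma part1:
  fixes A :: "nat set" and N :: nat
  assumes fin: "finite A" and A0: "0 \<in> A" and cardA: "N = card A" and N2: "N \<ge> 2"
    and sp: "poly_has_spectrum A N"
    and small: "real (card {x::complex. cmod x = 1 \<and> gen_poly A x = 0}) < 3 * real N / 2 - 1"
  shows "(\<lambda>a. a mod N) ` A = {0..<N}"
proof -
  define Z where "Z = {x::complex. cmod x = 1 \<and> gen_poly A x = 0}"
  obtain \<theta> :: "nat \<Rightarrow> real" where H: "\<theta> 0 = 0 \<and>
        (\<forall>j\<in>{1..<N}. 0 < \<theta> j \<and> \<theta> j < 1) \<and>
        inj_on \<theta> {1..<N} \<and>
        (\<forall>i<N. \<forall>j<N. i \<noteq> j \<longrightarrow>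
            gen_poly A (exp (2 * pi * \<i> * complex_of_real (\<theta> i - \<theta> j))) = 0)"
    using sp unfolding poly_has_spectrum_def by (elim exE)
  have th0: "\<theta> 0 = 0" using H by (elim conjE)
  have th01: "\<And>j. j \<in> {1..<N} \<Longrightarrow> 0 < \<theta> j \<and> \<theta> j < 1" using H by (elim conjE) (rule bspec)
  have thinj: "inj_on \<theta> {1..<N}" using H by (elim conjE)
  have thz: "\<And>i j. i < N \<Longrightarrow> j < N \<Longrightarrow> i \<noteq> j \<Longrightarrow>
            gen_poly A (exp (2 * pi * \<i> * complex_of_real (\<theta> i - \<theta> j))) = 0" using H by (elim conjE) simp
  have thr: "0 \<le> \<theta> j \<and> \<theta> j < 1" if "j < N" for j
    using th01[of j] th0 that by (cases "j = 0") auto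
  have zer: "gen_poly A (ex (\<theta> i - \<theta> j)) = 0" if "i < N" "j < N" "i \<noteq> j" for i j
    using thz[OF that] unfolding ex_def .
  define T where "T = (\<lambda>j. ex (\<theta> j)) ` {..<N}"
  have injT: "inj_on (\<lambda>j. ex (\<theta> j)) {..<N}"
  proof (rule inj_onI)
    fix i j assume ij: "i \<in> {..<N}" "j \<in> {..<N}" "ex (\<theta> i) = ex (\<theta> j)"
    have e: "\<theta> i = \<theta> j"
      using ex_inj01[of "\<theta> i" "\<theta> j"] thr[of i] thr[of j] ij by simp
    show "i = j"
    proof (cases "i = 0 \<or> j = 0")
      case True
      show ?thesis
      proof (rule ccontr)
        assume ne: "i \<noteq> j"
        show False
        proof (cases "i = 0")
          case True
          then have "j \<in> {1..<N}" using ne ij by auto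
          then show False using th01[of j] e th0 True by simp
        next
          case False
          then have "j = 0" "i \<in> {1..<N}" using \<open>i = 0 \<or> j = 0\<close> ij by auto
          then show False using th01[of i] e th0 by simp
        qed
      qed
    next
      case False
      then show ?thesis using e thinj ij unfolding inj_on_def by auto
    qed
  qed
  have cT: "card T = N" unfolding T_def using injT by (simp add: card_image)
  have finT: "finite T" unfolding T_def by simp
  have T0: "0 \<notin> T" unfolding T_def by auto
  have T1: "1 \<in> T" unfolding T_def using N2 th0 by (auto intro!: image_eqI[of _ _ 0])
  define S where "S = {x / y | x y. x \<in> T \<and> y \<in> T}"
  have finS: "finite S"
  proof -
    have "S = (\<lambda>(x,y). x / y) ` (T \<times> T)" unfolding S_def by auto
    then show ?thesis using finT by simp
  qed
  have SZ: "S - {1} \<subseteq> Z"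
  proof
    fix s assume "s \<in> S - {1}"
    then obtain i j where ij: "i < N" "j < N" "s = ex (\<theta> i) / ex (\<theta> j)" "s \<noteq> 1"
      unfolding S_def T_def by auto
    then have s: "s = ex (\<theta> i - \<theta> j)" by (simp add: ex_diff)
    then have "i \<noteq> j" using ij by auto
    then show "s \<in> Z" unfolding Z_def using zer[OF ij(1,2)] s by simp
  qed
  have finZ: "finite Z" unfolding Z_def using gen_poly_finite_roots[OF fin A0] by (rule finite_subset[rotated]) auto
  have S1: "1 \<in> S" unfolding S_def using T1 by (auto intro!: exI[of _ 1])
  have "card S \<le> card (S - {1}) + 1"
    using finS S1 by (simp add: card_Diff_singleton)
  also have "card (S - {1}) \<le> card Z" using SZ finZ by (rule card_mono[rotated])
  finally have "card S \<le> card Z + 1" by simp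
  then have small2: "2 * card S < 3 * card T" using small cT unfolding Z_def[symmetric] by linarith
  have cl: "x / y \<in> S" if "x \<in> S" "y \<in> S" for x y
    by (rule freiman_div[OF finT T0 S_def small2 that])
  have S0: "0 \<notin> S" unfolding S_def using T0 by auto
  define M where "M = card S"
  have Seq: "S = {z. z ^ M = 1}" unfolding M_def by (rule finite_div_closed_roots[OF finS S1 S0 cl])
  have TS: "T \<subseteq> S"
  proof
    fix t assume t: "t \<in> T"
    have "t = t / 1" by simp
    then show "t \<in> S" unfolding S_def using t T1 by blast
  qed
  have NM: "N \<le> M" unfolding M_def using card_mono[OF finS TS] cT by simp
  have Mpos: "M > 0" using NM N2 by simp
  have key: "of_nat N = (of_nat M * of_nat (card {a\<in>A. a mod M = r}) :: complex)" if r: "r < M" for r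
  proof -
    have "(\<Sum>z\<in>S. z ^ (M - r) * gen_poly A z) = (\<Sum>z\<in>S. if z = 1 then of_nat N else 0)"
    proof (rule sum.cong)
      fix z assume z: "z \<in> S"
      show "z ^ (M - r) * gen_poly A z = (if z = 1 then of_nat N else 0)"
      proof (cases "z = 1")
        case True
        then show ?thesis by (simp add: gen_poly_def cardA)
      next
        case False
        then have "z \<in> Z" using SZ z by auto
        then show ?thesis using False unfolding Z_def by simp
      qed
    qed simp
    also have "\<dots> = of_nat N" using S1 finS by (simp add: sum.delta)
    finally have L: "(\<Sum>z\<in>S. z ^ (M - r) * gen_poly A z) = of_nat N" .
    have "(\<Sum>z\<in>S. z ^ (M - r) * gen_poly A z) = (\<Sum>z\<in>S. \<Sum>a\<in>A. z ^ (a + (M - r)))"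
      unfolding gen_poly_def by (simp add: sum_distrib_left sum_distrib_right power_add mult.commute)
    also have "\<dots> = (\<Sum>a\<in>A. \<Sum>z\<in>S. z ^ (a + (M - r)))" by (rule sum.swap)
    also have "\<dots> = (\<Sum>a\<in>A. if a mod M = r then of_nat M else 0)"
      unfolding Seq using roots_unity_sum[OF Mpos] dvd_shift[OF r] by simp
    also have "\<dots> = of_nat M * of_nat (card {a\<in>A. a mod M = r})"
      using fin by (simp add: sum.If_cases Int_def conj_commute)
    finally show ?thesis using L by simp
  qed
  have "0 \<in> {a\<in>A. a mod M = 0}" using A0 by simp
  then have c1: "card {a\<in>A. a mod M = 0} > 0" using fin by (auto simp: card_gt_0_iff)
  have "of_nat N = (of_nat (M * card {a\<in>A. a mod M = 0}) :: complex)" using key[OF Mpos] by simp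
  then have "N = M * card {a\<in>A. a mod M = 0}" by (simp only: of_nat_eq_iff)
  then have "M \<le> N" using c1 by simp
  then have MN: "M = N" using NM by simp
  show ?thesis
  proof
    show "(\<lambda>a. a mod N) ` A \<subseteq> {0..<N}" using N2 by auto
  next
    show "{0..<N} \<subseteq> (\<lambda>a. a mod N) ` A"
    proof
      fix r assume "r \<in> {0..<N}"
      then have r: "r < M" using MN by simp
      have "of_nat N = (of_nat (N * card {a\<in>A. a mod N = r}) :: complex)" using key[OF r] MN by simp
      then have "N = N * card {a\<in>A. a mod N = r}" by (simp only: of_nat_eq_iff)
      then have "card {a\<in>A. a mod N = r} = 1" using N2 by simp
      then have "{a\<in>A. a mod N = r} \<noteq> {}" by (metis card.empty zero_neq_one)
      then show "r \<in> (\<lambda>a. a mod N) ` A" by auto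
    qed
  qed
qed

lemma res_inj:
  assumes fin: "finite A" and cardA: "N = card A" and img: "(\<lambda>a. a mod N) ` A = {0..<N}"
  shows "inj_on (\<lambda>a. a mod N) A"
  using fin img cardA by (intro eq_card_imp_inj_on) auto

lemma part2:
  assumes fin: "finite A" and cardA: "N = card A" and N2: "N \<ge> 2" and img: "(\<lambda>a. a mod N) ` A = {0..<N}"
  shows "\<forall>z::int. \<exists>!p::int \<times> int. fst p \<in> int ` A \<and> z = fst p + int N * snd p"
proof
  fix z :: int
  have inj: "inj_on (\<lambda>a. a mod N) A" by (rule res_inj[OF fin cardA img])
  have "nat (z mod int N) \<in> {0..<N}" using N2 by (simp add: nat_less_iff)
  then have "nat (z mod int N) \<in> (\<lambda>a. a mod N) ` A" using img by simp
  then obtain a where a1: "nat (z mod int N) = a mod N" and a0: "a \<in> A" by (rule imageE)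
  have a: "a \<in> A" "a mod N = nat (z mod int N)" using a0 a1 by auto
  have am: "int a mod int N = z mod int N" using a(2) N2 by (simp add: zmod_int[symmetric])
  define k where "k = (z - int a) div int N"
  have "int N dvd (z - int a)" using am[symmetric] by (simp add: mod_eq_dvd_iff)
  then have zk: "z = int a + int N * k" unfolding k_def by simp
  show "\<exists>!p::int \<times> int. fst p \<in> int ` A \<and> z = fst p + int N * snd p"
  proof (rule ex1I[of _ "(int a, k)"])
    show "fst (int a, k) \<in> int ` A \<and> z = fst (int a, k) + int N * snd (int a, k)" using a zk by simp
  next
    fix p :: "int \<times> int" assume p: "fst p \<in> int ` A \<and> z = fst p + int N * snd p"
    then obtain b where b: "b \<in> A" "fst p = int b" by auto
    have "int b mod int N = z mod int N" using p b by simp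
    then have "int (b mod N) = int (a mod N)" using am by (simp add: zmod_int)
    then have "b mod N = a mod N" by simp
    then have "b = a" using inj a(1) b(1) unfolding inj_on_def by blast
    then have "snd p = k" using p b zk N2 by simp
    then show "p = (int a, k)" using b \<open>b = a\<close> by (simp add: prod_eq_iff)
  qed
qed

lemma cont_meas: "continuous_on UNIV f \<Longrightarrow> f \<in> borel_measurable lebesgue"
  using continuous_imp_measurable_on_sets_lebesgue[of UNIV f] by (simp add: lebesgue_on_UNIV_eq)

lemma ex_cont [continuous_intros]: "continuous_on S g \<Longrightarrow> continuous_on S (\<lambda>x. ex (g x))"
  unfolding ex_def by (intro continuous_intros)

lemma cnj_ex: "cnj (ex t) = ex (- t)"
  unfolding ex_def exp_cnj by simp

lemma ex_lin_cont [continuous_intros]: "continuous_on S (\<lambda>x::real. ex (a * x / d))"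
proof -
  have "(\<lambda>x::real. ex (a * x / d)) = (\<lambda>x. ex ((a / d) * x))" by (rule ext) simp
  moreover have "continuous_on S (\<lambda>x::real. ex ((a / d) * x))" by (intro continuous_intros)
  ultimately show ?thesis by simp
qed

lemma integrable_mult_bdd:
  fixes F g :: "real \<Rightarrow> complex"
  assumes F: "integrable lebesgue F" and g: "g \<in> borel_measurable lebesgue" and B: "\<And>x. norm (g x) \<le> B"
  shows "integrable lebesgue (\<lambda>x. F x * g x)"
proof (rule Bochner_Integration.integrable_bound)
  show "integrable lebesgue (\<lambda>x. of_real B * F x)" using F by simp
  show "(\<lambda>x. F x * g x) \<in> borel_measurable lebesgue" using F g by measurable
  show "AE x in lebesgue. norm (F x * g x) \<le> norm (of_real B * F x)"
  proof (rule AE_I2)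
    fix x
    have "norm (F x * g x) = norm (F x) * norm (g x)" by (simp add: norm_mult)
    also have "\<dots> \<le> norm (F x) * B" using B by (intro mult_left_mono) auto
    also have "\<dots> \<le> norm (of_real B * F x)"
      by (simp add: norm_mult mult.commute mult_right_mono)
    finally show "norm (F x * g x) \<le> norm (of_real B * F x)" .
  qed
qed

inductive trig :: "nat \<Rightarrow> (real \<Rightarrow> complex) \<Rightarrow> bool" for N where
  basic: "trig N (\<lambda>x. c * ex (of_int k * x / real N))"
| add: "trig N f \<Longrightarrow> trig N g \<Longrightarrow> trig N (\<lambda>x. f x + g x)"

lemma trig_mult: "trig N f \<Longrightarrow> trig N g \<Longrightarrow> trig N (\<lambda>x. f x * g x)"
proof (induction f rule: trig.induct)
  case (basic c k)
  from basic.prems show ?case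
  proof (induction g rule: trig.induct)
    case (basic d j)
    have eq: "(\<lambda>x. c * ex (of_int k * x / real N) * (d * ex (of_int j * x / real N)))
        = (\<lambda>x. (c * d) * ex (of_int (k + j) * x / real N))"
      by (rule ext) (simp add: ex_add[symmetric] algebra_simps add_divide_distrib)
    show ?case unfolding eq by (rule trig.basic)
  next
    case (add g1 g2)
    have "(\<lambda>x. c * ex (of_int k * x / real N) * (g1 x + g2 x))
        = (\<lambda>x. c * ex (of_int k * x / real N) * g1 x + c * ex (of_int k * x / real N) * g2 x)"
      by (rule ext) (simp add: algebra_simps)
    then show ?case using add by (simp add: trig.add)
  qed
next
  case (add f1 f2)
  have "(\<lambda>x. (f1 x + f2 x) * g x) = (\<lambda>x. f1 x * g x + f2 x * g x)"
    by (rule ext) (simp add: algebra_simps)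
  then show ?case using add by (simp add: trig.add)
qed

lemma trig_const: "trig N (\<lambda>x. c)"
  using trig.basic[of N c 0] by simp

lemma trig_poly:
  fixes p :: "complex \<Rightarrow> real"
  assumes "real_polynomial_function p"
  shows "trig N (\<lambda>x. complex_of_real (p (ex (x / real N))))"
  using assms
proof (induction p rule: real_polynomial_function.induct)
  case (linear p)
  interpret bounded_linear p by fact
  have pz: "p z = Re z * p 1 + Im z * p \<i>" for z
  proof -
    have "z = Re z *\<^sub>R 1 + Im z *\<^sub>R \<i>" by (simp add: complex_eq_iff)
    then have "p z = p (Re z *\<^sub>R 1 + Im z *\<^sub>R \<i>)" by simp
    also have "\<dots> = Re z * p 1 + Im z * p \<i>" by (simp add: add scale)
    finally show ?thesis .
  qed
  define c1 :: complex where "c1 = of_real (p 1) / 2 + of_real (p \<i>) / (2 * \<i>)"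
  define c2 :: complex where "c2 = of_real (p 1) / 2 - of_real (p \<i>) / (2 * \<i>)"
  have eq: "complex_of_real (p w) = c1 * w + c2 * cnj w" for w
  proof -
    have "complex_of_real (p w) = of_real (Re w) * of_real (p 1) + of_real (Im w) * of_real (p \<i>)"
      by (simp only: pz[of w] of_real_add of_real_mult)
    also have "\<dots> = c1 * w + c2 * cnj w"
    proof -
      have e1: "of_real (p 1) / 2 * (w + cnj w) = of_real (p 1) * complex_of_real (Re w)" by (simp add: complex_add_cnj)
      have e2: "of_real (p \<i>) / (2*\<i>) * (w - cnj w) = of_real (p \<i>) * complex_of_real (Im w)"
        by (simp add: complex_diff_cnj field_simps)
      have gen: "(\<alpha> + \<beta>) * w + (\<alpha> - \<beta>) * cnj w = \<alpha> * (w + cnj w) + \<beta> * (w - cnj w)" for \<alpha> \<beta> :: complex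
        by (simp add: algebra_simps)
      have "c1 * w + c2 * cnj w = of_real (p 1) / 2 * (w + cnj w) + of_real (p \<i>) / (2*\<i>) * (w - cnj w)"
        unfolding c1_def c2_def by (rule gen)
      then have "c1 * w + c2 * cnj w = of_real (p 1) * complex_of_real (Re w) + of_real (p \<i>) * complex_of_real (Im w)"
        using e1 e2 by (simp only:)
      then show ?thesis by (simp only: mult.commute)
    qed
    finally show ?thesis .
  qed
  have "trig N (\<lambda>x. c1 * ex (of_int 1 * x / real N) + c2 * ex (of_int (-1) * x / real N))"
    by (intro trig.add trig.basic)
  moreover have "(\<lambda>x. c1 * ex (of_int 1 * x / real N) + c2 * ex (of_int (-1) * x / real N))
      = (\<lambda>x. complex_of_real (p (ex (x / real N))))"
    by (rule ext) (simp add: eq cnj_ex)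
  ultimately show ?case by simp
next
  case (const c)
  then show ?case by (rule trig_const)
next
  case (add f g)
  then show ?case by (simp add: trig.add)
next
  case (mult f g)
  then show ?case by (simp add: trig_mult)
qed

lemma trig_int:
  fixes F :: "real \<Rightarrow> complex"
  assumes F: "integrable lebesgue F"
    and orth: "\<And>k::int. integral\<^sup>L lebesgue (\<lambda>x. F x * ex (of_int k * x / real N)) = 0"
    and "trig N h"
  shows "integrable lebesgue (\<lambda>x. F x * h x) \<and> integral\<^sup>L lebesgue (\<lambda>x. F x * h x) = 0"
  using \<open>trig N h\<close>
proof (induction h rule: trig.induct)
  case (basic c k)
  have i: "integrable lebesgue (\<lambda>x. F x * ex (of_int k * x / real N))"
    by (rule integrable_mult_bdd[OF F, of _ 1]) (auto intro!: cont_meas ex_lin_cont)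
  have "(\<lambda>x. F x * (c * ex (of_int k * x / real N))) = (\<lambda>x. c * (F x * ex (of_int k * x / real N)))"
    by (rule ext) (simp add: algebra_simps)
  then show ?case using i orth[of k] by simp
next
  case (add f g)
  have "(\<lambda>x. F x * (f x + g x)) = (\<lambda>x. F x * f x + F x * g x)" by (rule ext) (simp add: algebra_simps)
  then show ?case using add by simp
qed

lemma u_cont: "continuous_on S (\<lambda>x::real. ex (x / real N))"
  using ex_lin_cont[of S 1 "real N"] by simp

lemma approx_zero:
  fixes F :: "real \<Rightarrow> complex" and \<phi> :: "complex \<Rightarrow> real"
  assumes F: "integrable lebesgue F"
    and orth: "\<And>k::int. integral\<^sup>L lebesgue (\<lambda>x. F x * ex (of_int k * x / real N)) = 0"
    and \<phi>: "continuous_on UNIV \<phi>"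
  shows "integral\<^sup>L lebesgue (\<lambda>x. F x * of_real (\<phi> (ex (x / real N)))) = 0"
proof -
  define u where "u x = ex (x / real N)" for x
  have usph: "u x \<in> sphere 0 1" for x unfolding u_def by simp
  have ucont: "continuous_on UNIV u" unfolding u_def by (rule u_cont)
  have phu: "continuous_on UNIV (\<lambda>x. \<phi> (u x))"
    by (rule continuous_on_compose2[OF \<phi> ucont]) auto
  have "compact (\<phi> ` sphere 0 1)"
    by (rule compact_continuous_image[OF continuous_on_subset[OF \<phi>] compact_sphere]) auto
  then obtain B where B: "\<And>z. z \<in> sphere 0 1 \<Longrightarrow> norm (\<phi> z) \<le> B"
    using compact_imp_bounded[of "\<phi> ` sphere 0 1"] unfolding bounded_iff by blast
  define G where "G x = complex_of_real (\<phi> (u x))" for x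
  have Gc: "continuous_on UNIV G" unfolding G_def by (intro continuous_intros phu)
  have intG: "integrable lebesgue (\<lambda>x. F x * G x)"
    by (rule integrable_mult_bdd[OF F cont_meas[OF Gc], of B]) (simp add: G_def, metis B usph real_norm_def)
  define C where "C = integral\<^sup>L lebesgue (\<lambda>x. norm (F x))"
  have C0: "C \<ge> 0" unfolding C_def by simp
  have bound: "norm (integral\<^sup>L lebesgue (\<lambda>x. F x * G x)) \<le> e * C" if e: "e > 0" for e
  proof -
    obtain g where g: "real_polynomial_function g" and ge: "\<And>z. z \<in> sphere 0 1 \<Longrightarrow> \<bar>\<phi> z - g z\<bar> < e"
      using Stone_Weierstrass_real_polynomial_function[OF compact_sphere continuous_on_subset[OF \<phi>] e] by blast
    have tg: "trig N (\<lambda>x. complex_of_real (g (u x)))" unfolding u_def by (rule trig_poly[OF g])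
    from trig_int[OF F orth tg] have ig: "integrable lebesgue (\<lambda>x. F x * complex_of_real (g (u x)))"
      and zg: "integral\<^sup>L lebesgue (\<lambda>x. F x * complex_of_real (g (u x))) = 0" by auto
    have "integral\<^sup>L lebesgue (\<lambda>x. F x * G x)
        = integral\<^sup>L lebesgue (\<lambda>x. F x * G x) - integral\<^sup>L lebesgue (\<lambda>x. F x * complex_of_real (g (u x)))"
      using zg by simp
    also have "\<dots> = integral\<^sup>L lebesgue (\<lambda>x. F x * G x - F x * complex_of_real (g (u x)))"
      by (rule Bochner_Integration.integral_diff[OF intG ig, symmetric])
    finally have eq: "integral\<^sup>L lebesgue (\<lambda>x. F x * G x) = integral\<^sup>L lebesgue (\<lambda>x. F x * G x - F x * complex_of_real (g (u x)))" .
    have "norm (integral\<^sup>L lebesgue (\<lambda>x. F x * G x - F x * complex_of_real (g (u x))))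
        \<le> integral\<^sup>L lebesgue (\<lambda>x. e * norm (F x))"
    proof (rule Bochner_Integration.integral_norm_bound_integral)
      show "integrable lebesgue (\<lambda>x. F x * G x - F x * complex_of_real (g (u x)))" using intG ig by simp
      show "integrable lebesgue (\<lambda>x. e * norm (F x))" using F by simp
      fix x
      have "norm (F x * G x - F x * complex_of_real (g (u x))) = norm (F x) * \<bar>\<phi> (u x) - g (u x)\<bar>"
        unfolding G_def by (simp add: norm_mult right_diff_distrib[symmetric] of_real_diff[symmetric] del: of_real_diff)
      also have "\<dots> \<le> norm (F x) * e" using ge[OF usph[of x]] by (intro mult_left_mono) auto
      finally show "norm (F x * G x - F x * complex_of_real (g (u x))) \<le> e * norm (F x)" by (simp add: mult.commute)
    qed
    also have "\<dots> = e * C" unfolding C_def by simp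
    finally show ?thesis using eq by simp
  qed
  have "norm (integral\<^sup>L lebesgue (\<lambda>x. F x * G x)) \<le> 0"
  proof (rule ccontr)
    assume "\<not> ?thesis"
    then have d: "norm (integral\<^sup>L lebesgue (\<lambda>x. F x * G x)) > 0" by simp
    define e where "e = norm (integral\<^sup>L lebesgue (\<lambda>x. F x * G x)) / (2 * (C + 1))"
    have e0: "e > 0" unfolding e_def using d C0 by simp
    have "e * C \<le> e * (C + 1)" using e0 by simp
    also have "\<dots> = norm (integral\<^sup>L lebesgue (\<lambda>x. F x * G x)) / 2"
    proof -
      have "C + 1 \<noteq> 0" using C0 by simp
      then show ?thesis unfolding e_def by (simp add: field_simps)
    qed
    finally show False using bound[OF e0] d by simp
  qed
  then show ?thesis unfolding G_def u_def by simp
qed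

lemma closed_zero:
  fixes F :: "real \<Rightarrow> complex" and B :: "complex set"
  assumes F: "integrable lebesgue F"
    and orth: "\<And>k::int. integral\<^sup>L lebesgue (\<lambda>x. F x * ex (of_int k * x / real N)) = 0"
    and B: "closed B"
  shows "integral\<^sup>L lebesgue (\<lambda>x. F x * of_real (indicator B (ex (x / real N)))) = 0"
proof (cases "B = {}")
  case True
  then show ?thesis by simp
next
  case False
  define u where "u x = ex (x / real N)" for x
  have ucont: "continuous_on UNIV u" unfolding u_def by (rule u_cont)
  define \<phi> where "\<phi> n z = max 0 (1 - real (Suc n) * infdist z B)" for n z
  have \<phi>c: "continuous_on UNIV (\<phi> n)" for n
    unfolding \<phi>_def by (intro continuous_intros continuous_on_infdist continuous_on_id)
  have \<phi>01: "0 \<le> \<phi> n z \<and> \<phi> n z \<le> 1" for n z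
    unfolding \<phi>_def using infdist_nonneg[of z B] by auto
  define s where "s n x = F x * of_real (\<phi> n (u x))" for n x
  have s0: "integral\<^sup>L lebesgue (s n) = 0" for n
    unfolding s_def u_def by (rule approx_zero[OF F orth \<phi>c])
  have Fm: "F \<in> borel_measurable lebesgue" using F by (rule borel_measurable_integrable)
  have um: "u \<in> borel_measurable lebesgue" by (rule cont_meas[OF ucont])
  have indm: "(\<lambda>x. indicator B (u x) :: real) \<in> borel_measurable lebesgue"
  proof -
    have "(indicator B :: complex \<Rightarrow> real) \<in> borel_measurable borel"
      using B by (intro borel_measurable_indicator) (simp add: borel_closed)
    from measurable_compose[OF um this] show ?thesis by (simp add: o_def)
  qed
  have lim: "(\<lambda>n. s n x) \<longlonglongrightarrow> F x * of_real (indicator B (u x))" for x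
  proof -
    have "(\<lambda>n. \<phi> n (u x)) \<longlonglongrightarrow> indicator B (u x)"
    proof (cases "u x \<in> B")
      case True
      then have "\<phi> n (u x) = 1" for n unfolding \<phi>_def by (simp add: infdist_zero)
      then show ?thesis using True by simp
    next
      case nB: False
      then have d: "infdist (u x) B > 0"
        using in_closed_iff_infdist_zero[OF B False, of "u x"] infdist_nonneg[of "u x" B] by simp
      obtain M :: nat where M: "1 < real M * infdist (u x) B" using reals_Archimedean3[OF d] by blast
      have "eventually (\<lambda>n. \<phi> n (u x) = 0) sequentially"
        unfolding eventually_sequentially
      proof (intro exI allI impI)
        fix n assume "M \<le> n"
        then have "real M * infdist (u x) B \<le> real (Suc n) * infdist (u x) B"
          using d by (intro mult_right_mono) auto
        then show "\<phi> n (u x) = 0" unfolding \<phi>_def using M by simp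
      qed
      then have "(\<lambda>n. \<phi> n (u x)) \<longlonglongrightarrow> 0" by (rule tendsto_eventually)
      then show ?thesis using nB by simp
    qed
    then show ?thesis unfolding s_def by (intro tendsto_intros)
  qed
  have "(\<lambda>n. integral\<^sup>L lebesgue (s n)) \<longlonglongrightarrow> integral\<^sup>L lebesgue (\<lambda>x. F x * of_real (indicator B (u x)))"
  proof (rule integral_dominated_convergence[where w = "\<lambda>x. norm (F x)"])
    show "(\<lambda>x. F x * complex_of_real (indicator B (u x))) \<in> borel_measurable lebesgue"
      using Fm indm by measurable
    show "s n \<in> borel_measurable lebesgue" for n
    proof -
      have "continuous_on UNIV (\<lambda>x. complex_of_real (\<phi> n (u x)))"
        by (intro continuous_intros continuous_on_compose2[OF \<phi>c ucont]) auto
      then show ?thesis unfolding s_def using Fm cont_meas by measurable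
    qed
    show "integrable lebesgue (\<lambda>x. norm (F x))" using F by simp
    show "AE x in lebesgue. (\<lambda>n. s n x) \<longlonglongrightarrow> F x * complex_of_real (indicator B (u x))"
      using lim by simp
    show "AE x in lebesgue. norm (s n x) \<le> norm (F x)" for n
      unfolding s_def using \<phi>01 by (auto simp: norm_mult intro!: mult_left_le)
  qed
  then have "(\<lambda>n. 0::complex) \<longlonglongrightarrow> integral\<^sup>L lebesgue (\<lambda>x. F x * of_real (indicator B (u x)))"
    using s0 by simp
  then show ?thesis unfolding u_def using LIMSEQ_unique[OF tendsto_const] by metis
qed

definition Om :: "nat set \<Rightarrow> real set" where
  "Om A = (\<Union>a\<in>A. {real a..<real a + 1})"

lemma Om_sets: "finite A \<Longrightarrow> Om A \<in> sets lebesgue"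
  unfolding Om_def by (intro sets.finite_UN) auto

lemma Om_lmeas: "finite A \<Longrightarrow> Om A \<in> lmeasurable"
  by (intro bounded_set_imp_lmeasurable Om_sets) (auto simp: Om_def intro!: bounded_UN)

lemma L_inj:
  assumes fin: "finite A" and cardA: "N = card A" and N2: "N \<ge> 2" and img: "(\<lambda>a. a mod N) ` A = {0..<N}"
    and a: "a \<in> A" "real a < x" "x < real a + 1"
    and b: "b \<in> A" "real b \<le> y" "y \<le> real b + 1"
    and e: "ex (x / real N) = ex (y / real N)"
  shows "x = y"
proof -
  have Np: "real N > 0" using N2 by simp
  obtain m :: int where m: "x / real N - y / real N = of_int m"
    using e unfolding ex_eq_iff by (auto elim: Ints_cases)
  then have hxy: "x = y + real N * of_int m" using Np by (simp add: field_simps)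
  have notint: False if "x = of_int k" for k :: int
  proof -
    have "of_int (int a) < (of_int k :: real)" using a(2) that by simp
    then have "int a < k" by (simp only: of_int_less_iff)
    then have "int a + 1 \<le> k" by simp
    then have "real a + 1 \<le> x" using that by (metis of_int_le_iff of_int_of_nat_eq of_int_1 of_int_add)
    then show False using a(3) by simp
  qed
  consider "y = real b" | "y = real b + 1" | "real b < y \<and> y < real b + 1" using b by linarith
  then show ?thesis
  proof cases
    case 1
    then have "x = of_int (int b + int N * m)" using hxy by simp
    then show ?thesis using notint by blast
  next
    case 2
    then have "x = of_int (int b + 1 + int N * m)" using hxy by simp
    then show ?thesis using notint by blast
  next
    case 3
    have fy: "\<lfloor>y\<rfloor> = int b" using 3 by (simp add: floor_eq_iff)
    have fx: "\<lfloor>x\<rfloor> = int a" using a by (simp add: floor_eq_iff)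
    have "\<lfloor>x\<rfloor> = \<lfloor>y + of_int (int N * m)\<rfloor>" using hxy by simp
    also have "\<dots> = \<lfloor>y\<rfloor> + int N * m" by (simp only: floor_add_int)
    finally have ab: "int a = int b + int N * m" using fx fy by simp
    then have "int a mod int N = int b mod int N" by simp
    then have "a mod N = b mod N" by (metis of_nat_eq_iff zmod_int)
    then have "a = b" using res_inj[OF fin cardA img] a(1) b(1) unfolding inj_on_def by blast
    then have "m = 0" using ab N2 by simp
    then show ?thesis using hxy by simp
  qed
qed

lemma of_real_meas: "(g :: 'a \<Rightarrow> real) \<in> borel_measurable M \<Longrightarrow> (\<lambda>x. complex_of_real (g x)) \<in> borel_measurable M"
  by measurable

lemma ind_meas: "S \<in> sets lebesgue \<Longrightarrow> (\<lambda>x. complex_of_real (indicator S x)) \<in> borel_measurable lebesgue"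
  by (intro of_real_meas borel_measurable_indicator)

lemma borel_leb: "S \<in> sets borel \<Longrightarrow> S \<in> sets lebesgue"
  using sets_completionI_sets[of S lborel] by simp

lemma int_ind:
  fixes F :: "real \<Rightarrow> complex"
  assumes F: "integrable lebesgue F" and S: "S \<in> sets lebesgue"
  shows "integrable lebesgue (\<lambda>x. F x * of_real (indicator S x))"
  by (rule integrable_mult_bdd[OF F ind_meas[OF S], of 1]) (simp add: indicator_def)

lemma closedK_zero:
  fixes F :: "real \<Rightarrow> complex"
  assumes fin: "finite A" and cardA: "N = card A" and N2: "N \<ge> 2" and img: "(\<lambda>a. a mod N) ` A = {0..<N}"
    and F: "integrable lebesgue F" and Fz: "\<And>x. x \<notin> Om A \<Longrightarrow> F x = 0"
    and orth: "\<And>k::int. integral\<^sup>L lebesgue (\<lambda>x. F x * ex (of_int k * x / real N)) = 0"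
    and K: "closed K"
  shows "integral\<^sup>L lebesgue (\<lambda>x. F x * of_real (indicator K x)) = 0"
proof -
  define u where "u x = ex (x / real N)" for x
  define CK where "CK = (\<Union>b\<in>A. u ` (K \<inter> {real b..real b + 1}))"
  have "compact CK" unfolding CK_def
  proof (intro compact_UN fin)
    fix b assume "b \<in> A"
    show "compact (u ` (K \<inter> {real b..real b + 1}))"
      unfolding u_def by (intro compact_continuous_image u_cont closed_Int_compact K compact_Icc)
  qed
  then have CKc: "closed CK" by (rule compact_imp_closed)
  have z: "integral\<^sup>L lebesgue (\<lambda>x. F x * of_real (indicator CK (u x))) = 0"
    unfolding u_def by (rule closed_zero[OF F orth CKc])
  have AEn: "AE x in lebesgue. x \<notin> real ` A"
  proof -
    have "real ` A \<in> null_sets lborel" using fin by (intro finite_imp_null_set_lborel) simp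
    then have "AE x in lborel. x \<notin> real ` A" by (rule AE_not_in)
    then show ?thesis by (rule AE_completion)
  qed
  have pt: "F x * of_real (indicator K x) = F x * of_real (indicator CK (u x))" if xA: "x \<notin> real ` A" for x
  proof (cases "x \<in> Om A")
    case False
    then show ?thesis using Fz by simp
  next
    case True
    then obtain a where a: "a \<in> A" "real a \<le> x" "x < real a + 1" unfolding Om_def by auto
    have ax: "real a < x" using a xA by (metis image_eqI order_le_less)
    show ?thesis
    proof (cases "x \<in> K")
      case True
      then have "x \<in> K \<inter> {real a..real a + 1}" using a by auto
      then have "u x \<in> CK" unfolding CK_def using a(1) by blast
      then show ?thesis using True by simp
    next
      case False
      have "u x \<notin> CK"
      proof
        assume "u x \<in> CK"
        then obtain b y where b: "b \<in> A" "y \<in> K" "real b \<le> y" "y \<le> real b + 1" "u x = u y"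
          unfolding CK_def by auto
        have "x = y" using L_inj[OF fin cardA N2 img a(1) ax a(3) b(1) b(3) b(4)] b(5) unfolding u_def by simp
        then show False using False b(2) by simp
      qed
      then show ?thesis using False by simp
    qed
  qed
  have Kl: "K \<in> sets lebesgue" using K by (intro borel_leb) (simp add: borel_closed)
  have um: "u \<in> borel_measurable lebesgue" unfolding u_def by (rule cont_meas[OF u_cont])
  have CKm: "(\<lambda>x. complex_of_real (indicator CK (u x))) \<in> borel_measurable lebesgue"
  proof -
    have "(\<lambda>z. complex_of_real (indicator CK z)) \<in> borel_measurable borel"
      using CKc by (intro of_real_meas borel_measurable_indicator) (simp add: borel_closed)
    from measurable_compose[OF um this] show ?thesis by (simp add: o_def)
  qed
  have Fm: "F \<in> borel_measurable lebesgue" using F by (rule borel_measurable_integrable)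
  have "integral\<^sup>L lebesgue (\<lambda>x. F x * of_real (indicator K x)) = integral\<^sup>L lebesgue (\<lambda>x. F x * of_real (indicator CK (u x)))"
  proof (rule integral_cong_AE)
    show "(\<lambda>x. F x * complex_of_real (indicator K x)) \<in> borel_measurable lebesgue"
      using Fm ind_meas[OF Kl] by measurable
    show "(\<lambda>x. F x * complex_of_real (indicator CK (u x))) \<in> borel_measurable lebesgue"
      using Fm CKm by measurable
    show "AE x in lebesgue. F x * complex_of_real (indicator K x) = F x * complex_of_real (indicator CK (u x))"
      using AEn by eventually_elim (rule pt)
  qed
  then show ?thesis using z by simp
qed

lemma borel_zero:
  fixes F :: "real \<Rightarrow> complex"
  assumes F: "integrable lebesgue F"
    and cl: "\<And>K. closed K \<Longrightarrow> integral\<^sup>L lebesgue (\<lambda>x. F x * of_real (indicator K x)) = 0"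
    and S: "S \<in> sets borel"
  shows "integral\<^sup>L lebesgue (\<lambda>x. F x * of_real (indicator S x)) = 0"
proof -
  define I where "I S = integral\<^sup>L lebesgue (\<lambda>x. F x * of_real (indicator S x))" for S
  have sig_leb: "A \<in> sets lebesgue" if "A \<in> sigma_sets UNIV {S. open S}" for A
    using that sets_borel borel_leb by auto
  have compl: "I (UNIV - T) = I UNIV - I T" if T: "T \<in> sets lebesgue" for T
  proof -
    have "(\<lambda>x. F x * of_real (indicator (UNIV - T) x)) = (\<lambda>x. F x * of_real (indicator UNIV x) - F x * of_real (indicator T x))"
      by (rule ext) (simp add: indicator_def)
    then show ?thesis unfolding I_def
      using Bochner_Integration.integral_diff[OF int_ind[OF F sets.top] int_ind[OF F T]] by simp
  qed
  have IU: "I UNIV = 0" unfolding I_def by (rule cl) simp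
  have h1: "Int_stable {S::real set. open S}" unfolding Int_stable_def by auto
  have h2: "{S::real set. open S} \<subseteq> Pow UNIV" by simp
  have Ssig: "S \<in> sigma_sets UNIV {S. open S}" using S by (metis sets_borel)
  have h3: "\<And>A. A \<in> {S. open S} \<Longrightarrow> I A = 0"
  proof -
    fix A :: "real set" assume "A \<in> {S. open S}"
    then have o: "open A" by simp
    have "I (UNIV - A) = 0" unfolding I_def using o by (intro cl closed_Diff) auto
    moreover have "I (UNIV - (UNIV - A)) = I UNIV - I (UNIV - A)"
      using o by (intro compl borel_leb borel_closed closed_Diff) auto
    moreover have "UNIV - (UNIV - A) = A" by auto
    ultimately show "I A = 0" using IU by simp
  qed
  have h4: "I {} = 0" unfolding I_def by simp
  have h5: "\<And>A. A \<in> sigma_sets UNIV {S. open S} \<Longrightarrow> I A = 0 \<Longrightarrow> I (UNIV - A) = 0"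
    using compl sig_leb IU by fastforce
  have h6: "\<And>A :: nat \<Rightarrow> real set. disjoint_family A \<Longrightarrow> range A \<subseteq> sigma_sets UNIV {S. open S} \<Longrightarrow> (\<And>i. I (A i) = 0)
      \<Longrightarrow> I (\<Union> (range A)) = 0"
  proof -
    fix A :: "nat \<Rightarrow> real set"
    assume dis: "disjoint_family A" and rA: "range A \<subseteq> sigma_sets UNIV {S. open S}" and z: "\<And>i. I (A i) = 0"
    have Al: "A i \<in> sets lebesgue" for i using rA sig_leb by auto
    have Pl: "\<Union> (A ` {..<n}) \<in> sets lebesgue" for n using Al by (intro sets.finite_UN) auto
    have UAl: "\<Union> (range A) \<in> sets lebesgue" using Al by (intro sets.countable_UN) auto
    have part: "I (\<Union> (A ` {..<n})) = 0" for n
    proof (induction n)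
      case 0
      then show ?case using h4 by simp
    next
      case (Suc n)
      have eq: "\<Union> (A ` {..<Suc n}) = A n \<union> \<Union> (A ` {..<n})" by (auto simp: lessThan_Suc)
      have dj: "A n \<inter> \<Union> (A ` {..<n}) = {}"
      proof -
        have "A n \<inter> A i = {}" if "i < n" for i using dis that unfolding disjoint_family_on_def by simp
        then show ?thesis by blast
      qed
      have "(\<lambda>x. F x * of_real (indicator (\<Union> (A ` {..<Suc n})) x))
          = (\<lambda>x. F x * of_real (indicator (A n) x) + F x * of_real (indicator (\<Union> (A ` {..<n})) x))"
        by (rule ext) (simp add: eq indicator_disj_union[OF dj] distrib_left)
      then have "I (\<Union> (A ` {..<Suc n})) = I (A n) + I (\<Union> (A ` {..<n}))"
        unfolding I_def using Bochner_Integration.integral_add[OF int_ind[OF F Al] int_ind[OF F Pl]] by simp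
      then show ?case using z Suc.IH by simp
    qed
    have "(\<lambda>n. I (\<Union> (A ` {..<n}))) \<longlonglongrightarrow> I (\<Union> (range A))"
      unfolding I_def
    proof (rule integral_dominated_convergence[where w = "\<lambda>x. norm (F x)"])
      show "(\<lambda>x. F x * complex_of_real (indicator (\<Union> (range A)) x)) \<in> borel_measurable lebesgue"
        using int_ind[OF F UAl] by (rule borel_measurable_integrable)
      show "(\<lambda>x. F x * complex_of_real (indicator (\<Union> (A ` {..<n})) x)) \<in> borel_measurable lebesgue" for n
        using int_ind[OF F Pl] by (rule borel_measurable_integrable)
      show "integrable lebesgue (\<lambda>x. norm (F x))" using F by simp
      show "AE x in lebesgue. (\<lambda>n. F x * complex_of_real (indicator (\<Union> (A ` {..<n})) x))
          \<longlonglongrightarrow> F x * complex_of_real (indicator (\<Union> (range A)) x)"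
        by (intro AE_I2 tendsto_intros LIMSEQ_indicator_UN)
      show "AE x in lebesgue. norm (F x * complex_of_real (indicator (\<Union> (A ` {..<n})) x)) \<le> norm (F x)" for n
        by (intro AE_I2) (simp add: norm_mult indicator_def)
    qed
    then have "(\<lambda>n. 0::complex) \<longlonglongrightarrow> I (\<Union> (range A))" using part by simp
    then show "I (\<Union> (range A)) = 0" using LIMSEQ_unique[OF tendsto_const] by metis
  qed
  have "I S = 0" by (rule sigma_sets_induct_disjoint[OF h1 h2 Ssig h3 h4 h5 h6])
  then show ?thesis unfolding I_def .
qed

lemma leb_zero:
  fixes F :: "real \<Rightarrow> complex"
  assumes F: "integrable lebesgue F"
    and cl: "\<And>K. closed K \<Longrightarrow> integral\<^sup>L lebesgue (\<lambda>x. F x * of_real (indicator K x)) = 0"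
    and S: "S \<in> sets lebesgue"
  shows "integral\<^sup>L lebesgue (\<lambda>x. F x * of_real (indicator S x)) = 0"
proof -
  obtain S' Nn N' where SN: "S = S' \<union> Nn" "Nn \<subseteq> N'" "N' \<in> null_sets lborel" "S' \<in> sets lborel"
    using S by (rule sets_completionE)
  have S'l: "S' \<in> sets lebesgue" using SN(4) by (intro borel_leb) simp
  have AEn: "AE x in lebesgue. x \<notin> N'" using AE_not_in[OF SN(3)] by (rule AE_completion)
  have "integral\<^sup>L lebesgue (\<lambda>x. F x * of_real (indicator S x)) = integral\<^sup>L lebesgue (\<lambda>x. F x * of_real (indicator S' x))"
  proof (rule integral_cong_AE)
    show "(\<lambda>x. F x * complex_of_real (indicator S x)) \<in> borel_measurable lebesgue"
      using int_ind[OF F S] by (rule borel_measurable_integrable)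
    show "(\<lambda>x. F x * complex_of_real (indicator S' x)) \<in> borel_measurable lebesgue"
      using int_ind[OF F S'l] by (rule borel_measurable_integrable)
    show "AE x in lebesgue. F x * complex_of_real (indicator S x) = F x * complex_of_real (indicator S' x)"
      using AEn by eventually_elim (use SN in \<open>auto simp: indicator_def\<close>)
  qed
  also have "\<dots> = 0" using SN(4) by (intro borel_zero[OF F cl]) simp_all
  finally show ?thesis .
qed

lemma ex_nat_pow: "ex (real n * t) = ex t ^ n"
proof -
  have "ex (real n * t) = exp (of_nat n * (2 * pi * \<i> * complex_of_real t))"
    unfolding ex_def by (simp add: algebra_simps)
  also have "\<dots> = ex t ^ n" unfolding ex_def by (rule exp_of_nat_mult)
  finally show ?thesis .
qed

lemma piece_integral:
  assumes c: "c \<noteq> 0"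
  shows "((\<lambda>x. ex (c * x)) has_integral ((ex (c * (b + 1)) - ex (c * b)) / (2 * pi * \<i> * c))) {b..<b + 1}"
proof -
  define w where "w = 2 * pi * \<i> * complex_of_real c"
  have w0: "w \<noteq> 0" unfolding w_def using c by simp
  define G where "G x = exp (complex_of_real x * w) / w" for x
  have Gex: "G x = ex (c * x) / w" for x unfolding G_def ex_def w_def by (simp add: algebra_simps)
  have der: "(G has_vector_derivative ex (c * x)) (at x within {b..b+1})" for x
  proof -
    have "((\<lambda>z. exp (z * w) / w) has_field_derivative exp (of_real x * w)) (at (of_real x))"
      using w0 by (auto intro!: derivative_eq_intros)
    then have "((\<lambda>x. exp (complex_of_real x * w) / w) has_vector_derivative exp (of_real x * w)) (at x within {b..b+1})"
      by (rule has_vector_derivative_real_field)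
    moreover have "exp (of_real x * w) = ex (c * x)" unfolding ex_def w_def by (simp add: algebra_simps)
    ultimately show ?thesis unfolding G_def by simp
  qed
  have "((\<lambda>x. ex (c * x)) has_integral (G (b + 1) - G b)) {b..b + 1}"
    by (rule fundamental_theorem_of_calculus) (auto intro: der)
  moreover have "G (b + 1) - G b = (ex (c * (b + 1)) - ex (c * b)) / (2 * pi * \<i> * c)"
    unfolding Gex w_def by (simp add: diff_divide_distrib)
  ultimately have hi: "((\<lambda>x. ex (c * x)) has_integral ((ex (c * (b + 1)) - ex (c * b)) / (2 * pi * \<i> * c))) {b..b + 1}"
    by simp
  have n1: "negligible {x \<in> {b..b + 1} - {b..<b + 1}. ex (c * x) \<noteq> 0}"
    by (rule negligible_subset[of "{b + 1}"]) auto
  have n2: "negligible {x \<in> {b..<b + 1} - {b..b + 1}. ex (c * x) \<noteq> 0}"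
  proof -
    have "{x \<in> {b..<b + 1} - {b..b + 1}. ex (c * x) \<noteq> 0} = {}" by auto
    then show ?thesis by (simp only: negligible_empty)
  qed
  show ?thesis by (rule iffD1[OF has_integral_spike_set_eq[OF n1 n2] hi])
qed

lemma orth_exp:
  assumes fin: "finite A" and cardA: "N = card A" and N2: "N \<ge> 2" and img: "(\<lambda>a. a mod N) ` A = {0..<N}"
    and j: "j \<noteq> 0"
  shows "integral\<^sup>L (lebesgue_on (Om A)) (\<lambda>x. ex (of_int j * x / real N)) = 0"
proof -
  define c where "c = of_int j / real N"
  have c0: "c \<noteq> 0" unfolding c_def using j N2 by simp
  have fe: "(\<lambda>x. ex (of_int j * x / real N)) = (\<lambda>x. ex (c * x))" unfolding c_def by (rule ext) simp
  have fm: "finite_measure (lebesgue_on (Om A))" by (rule finite_measure_lebesgue_on[OF Om_lmeas[OF fin]])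
  have Ol: "Om A \<in> sets lebesgue" by (rule Om_sets[OF fin])
  have int: "integrable (lebesgue_on (Om A)) (\<lambda>x. ex (c * x))"
  proof (rule finite_measure.integrable_const_bound[OF fm, of _ 1])
    show "AE x in lebesgue_on (Om A). norm (ex (c * x)) \<le> 1" by simp
    show "(\<lambda>x. ex (c * x)) \<in> borel_measurable (lebesgue_on (Om A))"
      by (rule continuous_imp_measurable_on_sets_lebesgue[OF _ Ol]) (intro continuous_intros)
  qed
  define G where "G b = (ex (c * (b + 1)) - ex (c * b)) / (2 * pi * \<i> * c)" for b
  have "((\<lambda>x. ex (c * x)) has_integral (\<Sum>a\<in>A. G (real a))) (\<Union>a\<in>A. {real a..<real a + 1})"
  proof (rule has_integral_UN[OF fin])
    show "((\<lambda>x. ex (c * x)) has_integral G (real a)) {real a..<real a + 1}" if "a \<in> A" for a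
      unfolding G_def by (rule piece_integral[OF c0])
    show "pairwise (\<lambda>a b. negligible ({real a..<real a + 1} \<inter> {real b..<real b + 1})) A"
    proof (rule pairwiseI)
      fix a b assume "a \<in> A" "b \<in> A" "a \<noteq> b"
      then have e: "{real a..<real a + 1} \<inter> {real b..<real b + 1} = {}" by auto
      show "negligible ({real a..<real a + 1} \<inter> {real b..<real b + 1})" unfolding e by (rule negligible_empty)
    qed
  qed
  then have I: "integral (Om A) (\<lambda>x. ex (c * x)) = (\<Sum>a\<in>A. G (real a))" unfolding Om_def by (rule integral_unique)
  define w where "w = ex c"
  have wN: "w ^ N = 1"
  proof -
    have "w ^ N = ex (real N * c)" unfolding w_def by (rule ex_nat_pow[symmetric])
    also have "real N * c = of_int j" unfolding c_def using N2 by simp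
    finally show ?thesis by (simp add: ex_eq_1_iff)
  qed
  have Ga: "G (real a) = (w - 1) / (2 * pi * \<i> * c) * w ^ (a mod N)" for a
  proof -
    have "ex (c * (real a + 1)) = ex (c * real a) * w" unfolding w_def by (simp add: distrib_left ex_add)
    moreover have "ex (c * real a) = w ^ a" unfolding w_def using ex_nat_pow[of a c] by (simp add: mult.commute)
    moreover have "w ^ a = w ^ (a mod N)"
    proof -
      have "w ^ a = w ^ (N * (a div N) + a mod N)" by simp
      also have "\<dots> = (w ^ N) ^ (a div N) * w ^ (a mod N)" by (simp only: power_add power_mult)
      finally have "w ^ a = (w ^ N) ^ (a div N) * w ^ (a mod N)" .
      then show ?thesis using wN by simp
    qed
    ultimately have "G (real a) = (ex (c * real a) * w - ex (c * real a)) / (2 * pi * \<i> * c)"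
      unfolding G_def by (simp add: distrib_left)
    also have "\<dots> = (w - 1) / (2 * pi * \<i> * c) * ex (c * real a)" by (simp add: algebra_simps)
    finally show ?thesis using \<open>ex (c * real a) = w ^ a\<close> \<open>w ^ a = w ^ (a mod N)\<close> by simp
  qed
  have "(\<Sum>a\<in>A. w ^ (a mod N)) = (\<Sum>r\<in>(\<lambda>a. a mod N) ` A. w ^ r)"
    using res_inj[OF fin cardA img] by (simp add: sum.reindex)
  also have "\<dots> = (\<Sum>r<N. w ^ r)" using img by (simp add: atLeast0LessThan)
  finally have sw: "(\<Sum>a\<in>A. w ^ (a mod N)) = (\<Sum>r<N. w ^ r)" .
  have "(\<Sum>a\<in>A. G (real a)) = (w - 1) / (2 * pi * \<i> * c) * (\<Sum>r<N. w ^ r)"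
    by (simp add: Ga sum_distrib_left sw[symmetric])
  also have "\<dots> = 0"
  proof (cases "w = 1")
    case True then show ?thesis by simp
  next
    case False then show ?thesis by (simp add: geometric_sum wN)
  qed
  finally have "integral (Om A) (\<lambda>x. ex (c * x)) = 0" using I by simp
  then show ?thesis unfolding fe using lebesgue_integral_eq_integral[OF int Ol] by simp
qed

lemma expo_ex: "expo l x = ex (l * x)"
  unfolding expo_def ex_def ..

lemma le_sq: "(t::real) \<le> 1 + t\<^sup>2"
proof -
  have "0 \<le> (t - 1/2)\<^sup>2" by simp
  then show ?thesis by (simp add: power2_eq_square algebra_simps)
qed

lemma completeness:
  assumes fin: "finite A" and cardA: "N = card A" and N2: "N \<ge> 2" and img: "(\<lambda>a. a mod N) ` A = {0..<N}"
    and f: "L2_on (Om A) f"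
    and orth: "\<forall>l\<in>range (\<lambda>k::int. real_of_int k / real N). L2_inner (Om A) f (expo l) = 0"
  shows "AE x in lebesgue_on (Om A). f x = 0"
proof -
  define M where "M = lebesgue_on (Om A)"
  have Ol: "Om A \<in> sets lebesgue" by (rule Om_sets[OF fin])
  have sp: "Om A \<inter> space lebesgue \<in> sets lebesgue" using Ol by simp
  have fm: "finite_measure M" unfolding M_def by (rule finite_measure_lebesgue_on[OF Om_lmeas[OF fin]])
  have fmeas: "f \<in> borel_measurable M" and i2: "integrable M (\<lambda>x. (cmod (f x))\<^sup>2)"
    using f unfolding L2_on_def M_def by auto
  have fint: "integrable M f"
  proof (rule Bochner_Integration.integrable_bound[of M "\<lambda>x. 1 + (cmod (f x))\<^sup>2"])
    show "integrable M (\<lambda>x. 1 + (cmod (f x))\<^sup>2)"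
      using finite_measure.integrable_const[OF fm] i2 by (rule Bochner_Integration.integrable_add)
    show "f \<in> borel_measurable M" by (rule fmeas)
    show "AE x in M. norm (f x) \<le> norm (1 + (cmod (f x))\<^sup>2)"
      by (intro AE_I2) (simp add: le_sq)
  qed
  define F where "F x = indicator (Om A) x *\<^sub>R f x" for x
  have Fint: "integrable lebesgue F"
    using fint unfolding M_def F_def by (simp add: integrable_restrict_space[OF sp])
  have Fz: "F x = 0" if "x \<notin> Om A" for x unfolding F_def using that by simp
  have conv: "integral\<^sup>L M g = integral\<^sup>L lebesgue (\<lambda>x. F x * h x)"
    if "\<And>x. g x = f x * h x" for g h
  proof -
    have "integral\<^sup>L M g = integral\<^sup>L lebesgue (\<lambda>x. indicator (Om A) x *\<^sub>R g x)"
      unfolding M_def by (rule integral_restrict_space[OF sp])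
    also have "(\<lambda>x. indicator (Om A) x *\<^sub>R g x) = (\<lambda>x. F x * h x)"
      by (rule ext) (simp add: F_def that)
    finally show ?thesis .
  qed
  have orthF: "integral\<^sup>L lebesgue (\<lambda>x. F x * ex (of_int k * x / real N)) = 0" for k :: int
  proof -
    define l where "l = real_of_int (- k) / real N"
    have "l \<in> range (\<lambda>k::int. real_of_int k / real N)" unfolding l_def by blast
    then have "L2_inner (Om A) f (expo l) = 0" using orth by blast
    moreover have "L2_inner (Om A) f (expo l) = integral\<^sup>L lebesgue (\<lambda>x. F x * ex (of_int k * x / real N))"
      unfolding L2_inner_def M_def[symmetric]
    proof (rule conv)
      fix x
      show "f x * cnj (expo l x) = f x * ex (real_of_int k * x / real N)"
        unfolding expo_ex cnj_ex l_def by simp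
    qed
    ultimately show ?thesis by simp
  qed
  have cl: "integral\<^sup>L lebesgue (\<lambda>x. F x * of_real (indicator K x)) = 0" if "closed K" for K
    by (rule closedK_zero[OF fin cardA N2 img Fint Fz orthF that])
  have "AE x in M. f x = 0"
  proof (rule sigma_finite_measure.density_zero[OF finite_measure.axioms(1)[OF fm] fint])
    fix S assume S: "S \<in> sets M"
    then have Sl: "S \<in> sets lebesgue" unfolding M_def using sets_restrict_space_iff[OF sp] by auto
    have "set_lebesgue_integral M S f = integral\<^sup>L M (\<lambda>x. indicator S x *\<^sub>R f x)"
      unfolding set_lebesgue_integral_def ..
    also have "\<dots> = integral\<^sup>L lebesgue (\<lambda>x. F x * of_real (indicator S x))"
      by (rule conv) (simp add: scaleR_conv_of_real mult.commute)
    also have "\<dots> = 0" by (rule leb_zero[OF Fint cl Sl])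
    finally show "set_lebesgue_integral M S f = 0" .
  qed
  then show ?thesis unfolding M_def .
qed

lemma spec:
  assumes fin: "finite A" and A0: "0 \<in> A" and cardA: "N = card A" and N2: "N \<ge> 2" and img: "(\<lambda>a. a mod N) ` A = {0..<N}"
  shows "spectrum_of (Om A) (range (\<lambda>k::int. real_of_int k / real N))"
proof -
  define M where "M = lebesgue_on (Om A)"
  have Ol: "Om A \<in> sets lebesgue" by (rule Om_sets[OF fin])
  have sp: "Om A \<inter> space lebesgue \<in> sets lebesgue" using Ol by simp
  have fm: "finite_measure M" unfolding M_def by (rule finite_measure_lebesgue_on[OF Om_lmeas[OF fin]])
  have meas: "expo l \<in> borel_measurable M" for l
    unfolding M_def expo_ex by (rule continuous_imp_measurable_on_sets_lebesgue[OF _ Ol]) (intro continuous_intros)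
  have L2: "L2_on (Om A) (expo l)" for l
    unfolding L2_on_def M_def[symmetric]
  proof
    show "expo l \<in> borel_measurable M" by (rule meas)
    have "integrable M (\<lambda>x. 1::real)" by (rule finite_measure.integrable_const[OF fm])
    moreover have "(\<lambda>x. (cmod (expo l x))\<^sup>2) = (\<lambda>x. 1::real)" by (rule ext) (simp add: expo_ex)
    ultimately show "integrable M (\<lambda>x. (cmod (expo l x))\<^sup>2)" by simp
  qed
  have nz: "\<not> (AE x in M. expo l x = 0)" for l
  proof
    assume "AE x in M. expo l x = 0"
    moreover have "expo l x \<noteq> 0" for x by (simp add: expo_ex)
    ultimately have "AE x in M. False" by simp
    then obtain Nn where Nn: "{x \<in> space M. \<not> False} \<subseteq> Nn" "emeasure M Nn = 0" "Nn \<in> sets M"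
      by (rule AE_E)
    have spM: "space M = Om A" unfolding M_def by (simp add: space_restrict_space)
    have NnO: "Nn \<subseteq> Om A" using sets.sets_into_space[OF Nn(3)] spM by simp
    have Nnl: "Nn \<in> sets lebesgue" using Nn(3) unfolding M_def using sets_restrict_space_iff[OF sp] by auto
    have "emeasure lebesgue Nn = 0" using Nn(2) emeasure_restrict_space[OF sp NnO] unfolding M_def by simp
    then have negN: "negligible Nn" using negligible_iff_emeasure0[OF Nnl] by simp
    have "{0..1/2::real} \<subseteq> Om A" unfolding Om_def using A0 by force
    then have "{0..1/2::real} \<subseteq> Nn" using Nn(1) spM by auto
    then have "negligible {0..1/2::real}" using negN negligible_subset by blast
    then show False using negligible_interval(1)[of "0::real" "1/2"] by simp
  qed
  have orthog: "L2_inner (Om A) (expo l) (expo m) = 0"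
    if lr: "l \<in> range (\<lambda>k::int. real_of_int k / real N)" and mr: "m \<in> range (\<lambda>k::int. real_of_int k / real N)" and lm: "l \<noteq> m" for l m
  proof -
    obtain k where k: "l = real_of_int k / real N" using lr by auto
    obtain k' where k': "m = real_of_int k' / real N" using mr by auto
    have kk: "k - k' \<noteq> 0" using lm k k' by auto
    have "(\<lambda>x. expo l x * cnj (expo m x)) = (\<lambda>x. ex (of_int (k - k') * x / real N))"
    proof (rule ext)
      fix x
      have "expo l x * cnj (expo m x) = ex (l * x + - (m * x))" unfolding expo_ex cnj_ex ex_add ..
      also have "l * x + - (m * x) = of_int (k - k') * x / real N" unfolding k k' using N2 by (simp add: field_simps)
      finally show "expo l x * cnj (expo m x) = ex (of_int (k - k') * x / real N)" .
    qed
    then show ?thesis unfolding L2_inner_def using orth_exp[OF fin cardA N2 img kk] by simp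
  qed
  define \<Lambda> where "\<Lambda> = range (\<lambda>k::int. real_of_int k / real N)"
  have h1: "\<forall>l\<in>\<Lambda>. L2_on (Om A) (expo l) \<and> \<not> (AE x in lebesgue_on (Om A). expo l x = 0)"
  proof
    fix l show "L2_on (Om A) (expo l) \<and> \<not> (AE x in lebesgue_on (Om A). expo l x = 0)"
      using L2[of l] nz[of l] unfolding M_def by (intro conjI)
  qed
  have h2: "\<forall>l\<in>\<Lambda>. \<forall>m\<in>\<Lambda>. l \<noteq> m \<longrightarrow> L2_inner (Om A) (expo l) (expo m) = 0"
    unfolding \<Lambda>_def using orthog by (intro ballI impI)
  have h3: "\<forall>f. L2_on (Om A) f \<and> (\<forall>l\<in>\<Lambda>. L2_inner (Om A) f (expo l) = 0)
            \<longrightarrow> (AE x in lebesgue_on (Om A). f x = 0)"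
  proof (intro allI impI)
    fix f assume "L2_on (Om A) f \<and> (\<forall>l\<in>\<Lambda>. L2_inner (Om A) f (expo l) = 0)"
    then show "AE x in lebesgue_on (Om A). f x = 0"
      unfolding \<Lambda>_def using completeness[OF fin cardA N2 img, of f] by (elim conjE)
  qed
  show ?thesis unfolding spectrum_of_def \<Lambda>_def[symmetric] using h1 h2 h3 by (intro conjI)
qed

theorem mainTheorem8:
  fixes A :: "nat set" and N :: nat
  assumes "finite A" and "0 \<in> A" and "N = card A" and "N \<ge> 2"
    and "poly_has_spectrum A N"
    and "real (card {x::complex. cmod x = 1 \<and> gen_poly A x = 0}) < 3 * real N / 2 - 1"
  shows "(\<lambda>a. a mod N) ` A = {0..<N} \<and>
         (\<forall>z::int. \<exists>!p::int \<times> int. fst p \<in> int ` A \<and> z = fst p + int N * snd p) \<and>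
         spectrum_of (\<Union>a\<in>A. {real a..<real a + 1}) (range (\<lambda>k::int. real_of_int k / real N))"
  proof -
  have img: "(\<lambda>a. a mod N) ` A = {0..<N}" by (rule part1[OF assms])
  have t: "\<forall>z::int. \<exists>!p::int \<times> int. fst p \<in> int ` A \<and> z = fst p + int N * snd p"
    by (rule part2[OF assms(1) assms(3) assms(4) img])
  have s: "spectrum_of (\<Union>a\<in>A. {real a..<real a + 1}) (range (\<lambda>k::int. real_of_int k / real N))"
    using spec[OF assms(1) assms(2) assms(3) assms(4) img] unfolding Om_def .
  show ?thesis using img t s by (intro conjI)
qed

end
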